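(* Let $S$ be a finitely generated submonoid of $\mathbb N^d$ that has a Frobenius element $\mathbf f$ and is irreducible. Then either $\mathrm{PF}(S)=\{\mathbf f\}$ or $\mathrm{PF}(S)=\{\mathbf f,\mathbf f/2\}$.
   Context: $\mathrm{pos}(S)$ is the rational cone generated by $S$ (nonnegative rational combinations of its generators), $\mathcal H(S)=(\mathrm{pos}(S)\setminus S)\cap\mathbb N^d$, and $\mathrm{PF}(S)=\{\mathbf a\in\mathcal H(S):\mathbf a+(S\setminus\{0\})\subseteq S\}$. A term order on $\mathbb N^d$ is a total order compatible with addition with $0$ least; $\mathbf f\in\mathcal H(S)$ is a Frobenius element if $\mathbf f=\max_\prec\mathcal H(S)$ for some term order $\prec$. $S$ is irreducible if it cannot be expressed as the intersection of two submonoids of $\mathbb N^d$ each containing it properly. *)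

theory Defs
  imports "HOL-Analysis.Finite_Cartesian_Product"
begin

text \<open>Elements of N^d are modelled as vectors of type nat^'d, with 'd a finite index type
  (d = CARD('d)).\<close>

definition submonoid :: "(nat^'d) set \<Rightarrow> bool" where
  "submonoid S \<longleftrightarrow> 0 \<in> S \<and> (\<forall>a\<in>S. \<forall>b\<in>S. a + b \<in> S)"

definition monoid_gen :: "(nat^'d) set \<Rightarrow> (nat^'d) set" where
  "monoid_gen G = \<Inter>{T. submonoid T \<and> G \<subseteq> T}"

definition finitely_generated :: "(nat^'d) set \<Rightarrow> bool" where
  "finitely_generated S \<longleftrightarrow> (\<exists>G. finite G \<and> S = monoid_gen G)"

text \<open>Integer points of the rational cone pos(S): vectors that are nonnegative rational
  combinations of finitely many elements of S.\<close>
definition pos_nat :: "(nat^'d) set \<Rightarrow> (nat^'d) set" where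
  "pos_nat S = {x. \<exists>F q. finite F \<and> F \<subseteq> S \<and> (\<forall>s\<in>F. (q s::rat) \<ge> 0) \<and>
        (\<forall>i. of_nat (x$i) = (\<Sum>s\<in>F. q s * of_nat (s$i)))}"

definition holes :: "(nat^'d) set \<Rightarrow> (nat^'d) set" where
  "holes S = pos_nat S - S"

definition PF :: "(nat^'d) set \<Rightarrow> (nat^'d) set" where
  "PF S = {a \<in> holes S. \<forall>s \<in> S - {0}. a + s \<in> S}"

definition term_order :: "(nat^'d \<Rightarrow> nat^'d \<Rightarrow> bool) \<Rightarrow> bool" where
  "term_order le \<longleftrightarrow>
     (\<forall>a. le a a) \<and> (\<forall>a b. le a b \<and> le b a \<longrightarrow> a = b) \<and>
     (\<forall>a b c. le a b \<and> le b c \<longrightarrow> le a c) \<and> (\<forall>a b. le a b \<or> le b a) \<and>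
     (\<forall>a b c. le a b \<longrightarrow> le (a + c) (b + c)) \<and> (\<forall>a. le 0 a)"

definition frobenius_element :: "(nat^'d) set \<Rightarrow> nat^'d \<Rightarrow> bool" where
  "frobenius_element S f \<longleftrightarrow> f \<in> holes S \<and>
     (\<exists>le. term_order le \<and> (\<forall>h\<in>holes S. le h f))"

definition irreducible_monoid :: "(nat^'d) set \<Rightarrow> bool" where
  "irreducible_monoid S \<longleftrightarrow>
     \<not> (\<exists>S1 S2. submonoid S1 \<and> submonoid S2 \<and> S \<subset> S1 \<and> S \<subset> S2 \<and> S = S1 \<inter> S2)"

end

theory Submission
  imports Defs
begin

definition sm :: "nat \<Rightarrow> nat^'d \<Rightarrow> nat^'d" where
  "sm m h = (\<chi> i. m * h$i)"

lemma sm_Suc: "sm (Suc m) h = h + sm m h"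
  by (simp add: sm_def vec_eq_iff plus_vec_def)

lemma sm_0: "sm 0 h = 0" by (simp add: sm_def vec_eq_iff)
lemma sm_1: "sm 1 h = h" by (simp add: sm_def vec_eq_iff)

lemma sm_add: "sm a h + sm b h = sm (a + b) h"
  by (simp add: sm_def vec_eq_iff algebra_simps)

lemma vec_add_eq0: "(a::nat^'d) + b = 0 \<Longrightarrow> b = 0"
  by (simp add: vec_eq_iff)

lemma pos_nat_add:
  assumes "x \<in> pos_nat S" "y \<in> pos_nat S"
  shows "x + y \<in> pos_nat S"
proof -
  obtain F1 q1 where F1: "finite F1" "F1 \<subseteq> S" "\<forall>s\<in>F1. (q1 s::rat) \<ge> 0"
    "\<forall>i. of_nat (x$i) = (\<Sum>s\<in>F1. q1 s * of_nat (s$i))"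
    using assms(1) unfolding pos_nat_def by blast
  obtain F2 q2 where F2: "finite F2" "F2 \<subseteq> S" "\<forall>s\<in>F2. (q2 s::rat) \<ge> 0"
    "\<forall>i. of_nat (y$i) = (\<Sum>s\<in>F2. q2 s * of_nat (s$i))"
    using assms(2) unfolding pos_nat_def by blast
  define p1 where "p1 s = (if s \<in> F1 then q1 s else 0)" for s
  define p2 where "p2 s = (if s \<in> F2 then q2 s else 0)" for s
  have s1: "(\<Sum>s\<in>F1. q1 s * of_nat (s$i)) = (\<Sum>s\<in>F1 \<union> F2. p1 s * of_nat (s$i))" for i
  proof -
    have "(\<Sum>s\<in>F1. q1 s * of_nat (s$i)) = (\<Sum>s\<in>F1. p1 s * of_nat (s$i))"
      by (simp add: p1_def)
    also have "\<dots> = (\<Sum>s\<in>F1 \<union> F2. p1 s * of_nat (s$i))"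
      by (rule sum.mono_neutral_left) (use F1 F2 in \<open>auto simp: p1_def\<close>)
    finally show ?thesis .
  qed
  have s2: "(\<Sum>s\<in>F2. q2 s * of_nat (s$i)) = (\<Sum>s\<in>F1 \<union> F2. p2 s * of_nat (s$i))" for i
  proof -
    have "(\<Sum>s\<in>F2. q2 s * of_nat (s$i)) = (\<Sum>s\<in>F2. p2 s * of_nat (s$i))"
      by (simp add: p2_def)
    also have "\<dots> = (\<Sum>s\<in>F1 \<union> F2. p2 s * of_nat (s$i))"
      by (rule sum.mono_neutral_left) (use F1 F2 in \<open>auto simp: p2_def\<close>)
    finally show ?thesis .
  qed
  show ?thesis unfolding pos_nat_def
  proof (intro CollectI exI conjI)
    show "finite (F1 \<union> F2)" using F1 F2 by auto
    show "F1 \<union> F2 \<subseteq> S" using F1 F2 by auto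
    show "\<forall>s\<in>F1 \<union> F2. (\<lambda>s. p1 s + p2 s) s \<ge> 0" using F1 F2 by (auto simp: p1_def p2_def)
    show "\<forall>i. of_nat ((x + y)$i) = (\<Sum>s\<in>F1 \<union> F2. (\<lambda>s. p1 s + p2 s) s * of_nat (s$i))"
      using F1(4) F2(4) s1 s2 by (simp add: algebra_simps sum.distrib)
  qed
qed

lemma pos_nat_sm:
  assumes "x \<in> pos_nat S"
  shows "sm m x \<in> pos_nat S"
proof -
  obtain F1 q1 where F1: "finite F1" "F1 \<subseteq> S" "\<forall>s\<in>F1. (q1 s::rat) \<ge> 0"
    "\<forall>i. of_nat (x$i) = (\<Sum>s\<in>F1. q1 s * of_nat (s$i))"
    using assms(1) unfolding pos_nat_def by blast
  show ?thesis unfolding pos_nat_def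
  proof (intro CollectI exI conjI)
    show "finite F1" "F1 \<subseteq> S" using F1 by auto
    show "\<forall>s\<in>F1. (\<lambda>s. of_nat m * q1 s) s \<ge> 0" using F1 by auto
    show "\<forall>i. of_nat (sm m x $i) = (\<Sum>s\<in>F1. (\<lambda>s. of_nat m * q1 s) s * of_nat (s$i))"
      using F1(4) by (simp add: sm_def sum_distrib_left mult.assoc)
  qed
qed

lemma S_pos: "s \<in> S \<Longrightarrow> s \<in> pos_nat S"
  unfolding pos_nat_def
  by (rule CollectI, rule exI[of _ "{s}"], rule exI[of _ "\<lambda>_. 1"]) auto

lemma PF_mult:
  assumes sub: "submonoid S" and h: "h \<in> PF S" and s: "s \<in> S" "s \<noteq> 0"
  shows "sm (Suc m) h + s \<in> S"
proof (induction m)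
  case 0
  then show ?case using h s by (simp add: sm_def PF_def)
next
  case (Suc m)
  have "sm (Suc m) h + s \<noteq> 0" using s(2) vec_add_eq0 by blast
  then have "h + (sm (Suc m) h + s) \<in> S" using Suc h by (simp add: PF_def)
  then show ?case by (simp add: sm_Suc add.assoc)
qed

theorem theorem4p3:
  fixes S :: "(nat^'d) set" and f :: "nat^'d"
  assumes "submonoid S" and "finitely_generated S"
    and "frobenius_element S f" and "irreducible_monoid S"
  shows "PF S = {f} \<or> (\<exists>h. h + h = f \<and> PF S = {f, h})"
proof -
  have S0: "0 \<in> S" and Sadd: "\<And>a b. a \<in> S \<Longrightarrow> b \<in> S \<Longrightarrow> a + b \<in> S"
    using assms(1) by (auto simp: submonoid_def)
  obtain le where to: "term_order le" and fmax: "\<forall>h\<in>holes S. le h f" and fh: "f \<in> holes S"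
    using assms(3) unfolding frobenius_element_def by blast
  have fS: "f \<notin> S" and fpos: "f \<in> pos_nat S" using fh by (auto simp: holes_def)
  have le_add: "le (f + s) f \<Longrightarrow> s = 0" for s
  proof -
    assume a: "le (f + s) f"
    have "le (0 + f) (s + f)" using to unfolding term_order_def by blast
    then have "le f (f + s)" by (simp add: add.commute)
    then have "f + s = f" using a to unfolding term_order_def by blast
    then show "s = 0" by (metis add.right_neutral add_left_cancel)
  qed
  have fPF: "f \<in> PF S"
  proof -
    have "f + s \<in> S" if "s \<in> S" "s \<noteq> 0" for s
    proof (rule ccontr)
      assume "f + s \<notin> S"
      moreover have "f + s \<in> pos_nat S" using pos_nat_add[OF fpos S_pos[OF that(1)]] .
      ultimately have "le (f + s) f" using fmax by (auto simp: holes_def)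
      then show False using le_add that by blast
    qed
    then show ?thesis using fh by (auto simp: PF_def)
  qed
  have ff: "f + f \<in> S"
  proof (rule ccontr)
    assume "f + f \<notin> S"
    moreover have "f + f \<in> pos_nat S" using pos_nat_add[OF fpos fpos] .
    ultimately have "le (f + f) f" using fmax by (auto simp: holes_def)
    then have "f = 0" using le_add by blast
    then show False using fS S0 by simp
  qed
  define T1 where "T1 = insert f S"
  have T1: "submonoid T1" "S \<subset> T1"
    using S0 Sadd ff fPF fS unfolding T1_def submonoid_def PF_def
    by (auto simp: add.commute)
  have main: "\<exists>n\<ge>2. f = sm n h" if hP: "h \<in> PF S" and hf: "h \<noteq> f" for h
  proof -
    define T2 where "T2 = S \<union> range (\<lambda>m. sm (Suc m) h)"
    have T2sub: "submonoid T2"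
      unfolding submonoid_def
    proof (intro conjI ballI)
      show "0 \<in> T2" using S0 by (simp add: T2_def)
      fix a b assume a: "a \<in> T2" and b: "b \<in> T2"
      have mix: "sm (Suc m) h + s \<in> T2" if "s \<in> S" for m s
      proof (cases "s = 0")
        case True then show ?thesis by (simp add: T2_def)
      next
        case False then show ?thesis using PF_mult[OF assms(1) hP that] by (simp add: T2_def)
      qed
      show "a + b \<in> T2"
      proof (cases "a \<in> S")
        case aS: True
        show ?thesis
        proof (cases "b \<in> S")
          case True then show ?thesis using aS Sadd by (simp add: T2_def)
        next
          case False
          then obtain m where "b = sm (Suc m) h" using b by (auto simp: T2_def)
          then show ?thesis using mix[OF aS] by (simp add: add.commute)
        qed
      next
        case False
        then obtain m where am: "a = sm (Suc m) h" using a by (auto simp: T2_def)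
        show ?thesis
        proof (cases "b \<in> S")
          case True then show ?thesis using mix am by simp
        next
          case False
          then obtain k where "b = sm (Suc k) h" using b by (auto simp: T2_def)
          then have "a + b = sm (Suc (Suc (m + k))) h" using am sm_add[of "Suc m" h "Suc k"] by simp
          then show ?thesis by (simp add: T2_def)
        qed
      qed
    qed
    have hS: "h \<notin> S" using hP by (auto simp: PF_def holes_def)
    have "h \<in> T2" using sm_1[of h] by (simp add: T2_def) (metis One_nat_def rangeI)
    then have T2p: "S \<subset> T2" using hS by (auto simp: T2_def)
    have "S \<noteq> T1 \<inter> T2" using assms(4) T1 T2sub T2p unfolding irreducible_monoid_def by blast
    then obtain x where "x \<in> T1" "x \<in> T2" "x \<notin> S" using T1 T2p by blast
    then obtain m where "f = sm (Suc m) h" by (auto simp: T1_def T2_def)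
    moreover have "m \<noteq> 0" using calculation hf by (auto simp: sm_def vec_eq_iff)
    ultimately show ?thesis by (intro exI[of _ "Suc m"]) auto
  qed
  have h0: "h \<noteq> 0" if "h \<in> PF S" for h using that S0 by (auto simp: PF_def holes_def)
  have half: "h + h = f" if hP: "h \<in> PF S" and hf: "h \<noteq> f" for h
  proof -
    obtain n where n: "n \<ge> 2" "f = sm n h" using main[OF hP hf] by blast
    have hn0: "h \<noteq> 0" using h0 hP .
    then obtain i where hi: "h$i \<noteq> 0" by (auto simp: vec_eq_iff)
    have "n = 2"
    proof (rule ccontr)
      assume "n \<noteq> 2"
      then have n3: "n \<ge> 3" using n by simp
      define g where "g = sm (n - 1) h"
      have gS: "g \<notin> S"
      proof
        assume gS: "g \<in> S"
        have "g \<noteq> 0" using hi n3 by (auto simp: g_def sm_def vec_eq_iff)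
        then have "h + g \<in> S" using hP gS by (auto simp: PF_def)
        moreover have "h + g = f" using n n3 sm_Suc[of "n - 1" h]
          by (simp add: g_def)
        ultimately show False using fS by simp
      qed
      have gpos: "g \<in> pos_nat S"
        using pos_nat_sm hP by (auto simp: g_def PF_def holes_def)
      have "g + s \<in> S" if "s \<in> S" "s \<noteq> 0" for s
        using PF_mult[OF assms(1) hP that, of "n - 2"] n3
        by (simp add: g_def) (metis Suc_diff_Suc Suc_le_lessD diff_Suc_1 le_trans numeral_2_eq_2 numeral_3_eq_3 Suc_leD)
      then have gP: "g \<in> PF S" using gS gpos by (auto simp: PF_def holes_def)
      have gf: "g \<noteq> f"
      proof
        assume "g = f"
        then have "g$i = f$i" by simp
        then have "(n - 1) * h$i = n * h$i" using n by (simp add: g_def sm_def)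
        then show False using hi n3 by simp
      qed
      obtain k where k: "k \<ge> 2" "f = sm k g" using main[OF gP gf] by blast
      have "f$i = f$i" by simp
      then have "n * h$i = k * ((n - 1) * h$i)" using n k by (metis g_def sm_def vec_lambda_beta)
      then have "n = k * (n - 1)" using hi by (simp add: mult.assoc)
      moreover have "k * (n - 1) \<ge> 2 * (n - 1)" using k by simp
      ultimately show False using n3 by simp
    qed
    then show ?thesis using n by (simp add: sm_def vec_eq_iff plus_vec_def)
  qed
  have uniq: "h = h'" if "h + h = f" "h' + h' = f" for h h' :: "nat^'d"
    using that by (auto simp: vec_eq_iff plus_vec_def) (metis add_self_div_2)
  show ?thesis
  proof (cases "PF S \<subseteq> {f}")
    case True then show ?thesis using fPF by blast
  next
    case False
    then obtain h where hP: "h \<in> PF S" "h \<noteq> f" by blast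
    have hh: "h + h = f" using half hP by blast
    have "PF S = {f, h}"
    proof
      show "{f, h} \<subseteq> PF S" using fPF hP by blast
      show "PF S \<subseteq> {f, h}"
      proof
        fix x assume "x \<in> PF S"
        then show "x \<in> {f, h}" using half uniq hh by blast
      qed
    qed
    then show ?thesis using hh by blast
  qed
qed

end
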